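(* Let $\mathbb{F}_2$ be the free group on two generators $x$ and $y$, and let $m,n$ be integers. Then the commutator $[x^m,y^n]=x^my^nx^{-m}y^{-n}$ is a product of two squares in $\mathbb{F}_2$ (i.e. $[x^m,y^n]=a^2b^2$ for some $a,b\in\mathbb{F}_2$) if and only if $mn$ is even.
   Context: For elements $g,h$ of a group, $[g,h]=ghg^{-1}h^{-1}$. *)

theory Defs
  imports "HOL-Algebra.Group"
begin

text \<open>Free group on two generators, built from reduced words.
  A letter is a pair (inverted, generator): generator False is x, True is y;
  inverted = True means the inverse of the generator.\<close>

type_synonym letter2 = "bool \<times> bool"

definition inv_letter :: "letter2 \<Rightarrow> letter2" where
  "inv_letter l = (\<not> fst l, snd l)"

fun reduced :: "letter2 list \<Rightarrow> bool" where
  "reduced [] = True"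
| "reduced [a] = True"
| "reduced (a # b # w) = (b \<noteq> inv_letter a \<and> reduced (b # w))"

definition reduce :: "letter2 list \<Rightarrow> letter2 list" where
  "reduce w = foldr (\<lambda>l acc. case acc of [] \<Rightarrow> [l]
                 | h # t \<Rightarrow> (if h = inv_letter l then t else l # acc)) w []"

definition F2 :: "letter2 list monoid" where
  "F2 = \<lparr> carrier = {w. reduced w}, mult = (\<lambda>a b. reduce (a @ b)), one = [] \<rparr>"

definition gen_x :: "letter2 list" where "gen_x = [(False, False)]"
definition gen_y :: "letter2 list" where "gen_y = [(False, True)]"

end

theory Submission imports Defs begin

definition stp :: "letter2 \<Rightarrow> letter2 list \<Rightarrow> letter2 list" where
  "stp l acc = (case acc of [] \<Rightarrow> [l] | h # t \<Rightarrow> (if h = inv_letter l then t else l # acc))"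

lemma reduce_stp: "reduce w = foldr stp w []"
  unfolding reduce_def stp_def by simp

lemma inv_inv[simp]: "inv_letter (inv_letter l) = l"
  by (simp add: inv_letter_def)

lemma reduced_tl: "reduced (h # t) \<Longrightarrow> reduced t"
  by (cases t) auto

lemma stp_reduced: "reduced s \<Longrightarrow> reduced (stp l s)"
  by (cases s) (auto simp: stp_def dest: reduced_tl)

lemma R_reduced: "reduced s \<Longrightarrow> reduced (foldr stp w s)"
  by (induction w) (auto intro: stp_reduced)

lemma reduce_id: "reduced w \<Longrightarrow> foldr stp w [] = w"
  by (induction w rule: reduced.induct) (auto simp: stp_def)

lemma cancel: "reduced s \<Longrightarrow> stp l (stp (inv_letter l) s) = s"
proof (cases s)
  case Nil then show ?thesis by (simp add: stp_def)
next
  case (Cons h t)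
  assume r: "reduced s"
  show ?thesis
  proof (cases "h = l")
    case True
    then show ?thesis using r Cons by (cases t) (auto simp: stp_def)
  next
    case False
    then show ?thesis using Cons by (auto simp: stp_def)
  qed
qed

lemma lemE: "reduced t \<Longrightarrow> reduced r \<Longrightarrow> foldr stp (stp l t) r = stp l (foldr stp t r)"
proof (cases t)
  case Nil then show ?thesis by (simp add: stp_def)
next
  case (Cons h t')
  assume rt: "reduced t" and rr: "reduced r"
  show ?thesis
  proof (cases "h = inv_letter l")
    case True
    have "reduced (foldr stp t' r)" using rr by (rule R_reduced)
    then show ?thesis using Cons True by (simp add: cancel) (simp add: stp_def)
  next
    case False
    then show ?thesis using Cons by (simp add: stp_def)
  qed
qed

lemma lemD: "reduced r \<Longrightarrow> foldr stp (foldr stp w []) r = foldr stp w r"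
proof (induction w)
  case Nil then show ?case by simp
next
  case (Cons l w)
  have "reduced (foldr stp w [])" by (rule R_reduced) simp
  then show ?case using Cons by (simp add: lemE)
qed

definition winv :: "letter2 list \<Rightarrow> letter2 list" where
  "winv w = rev (map inv_letter w)"

lemma winv_cancel: "reduced s \<Longrightarrow> foldr stp w (foldr stp (winv w) s) = s"
proof (induction w arbitrary: s)
  case Nil then show ?case by (simp add: winv_def)
next
  case (Cons l w)
  have "reduced (stp (inv_letter l) s)" using Cons.prems by (rule stp_reduced)
  then show ?case using Cons by (simp add: winv_def cancel)
qed

lemma winv_winv[simp]: "winv (winv w) = w"
  by (simp add: winv_def rev_map comp_def)

lemma F2_mult: "reduced b \<Longrightarrow> a \<otimes>\<^bsub>F2\<^esub> b = foldr stp a b"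
  by (simp add: F2_def reduce_stp reduce_id)

lemma group_F2: "group F2"
proof (rule groupI)
  fix x y assume "x \<in> carrier F2" "y \<in> carrier F2"
  then show "x \<otimes>\<^bsub>F2\<^esub> y \<in> carrier F2" by (simp add: F2_def reduce_stp R_reduced)
next
  show "\<one>\<^bsub>F2\<^esub> \<in> carrier F2" by (simp add: F2_def)
next
  fix x y z assume xyz: "x \<in> carrier F2" "y \<in> carrier F2" "z \<in> carrier F2"
  then have r: "reduced x" "reduced y" "reduced z" by (auto simp: F2_def)
  have "reduced (foldr stp y z)" using r by (simp add: R_reduced)
  moreover have "reduced (foldr stp x y)" using r by (simp add: R_reduced)
  ultimately show "x \<otimes>\<^bsub>F2\<^esub> y \<otimes>\<^bsub>F2\<^esub> z = x \<otimes>\<^bsub>F2\<^esub> (y \<otimes>\<^bsub>F2\<^esub> z)"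
    using r lemD[of z "x@y"] reduce_id[of y] by (simp add: F2_mult)
next
  fix x assume "x \<in> carrier F2"
  then show "\<one>\<^bsub>F2\<^esub> \<otimes>\<^bsub>F2\<^esub> x = x" by (simp add: F2_def reduce_stp reduce_id)
next
  fix x assume "x \<in> carrier F2"
  then have r: "reduced x" by (simp add: F2_def)
  define y where "y = foldr stp (winv x) []"
  have ry: "reduced y" unfolding y_def by (simp add: R_reduced)
  have "y \<otimes>\<^bsub>F2\<^esub> x = foldr stp (winv x) x"
    using r by (simp add: F2_mult y_def lemD)
  also have "\<dots> = []" using winv_cancel[of "[]" "winv x"] r by (simp add: reduce_id)
  finally show "\<exists>y\<in>carrier F2. y \<otimes>\<^bsub>F2\<^esub> x = \<one>\<^bsub>F2\<^esub>"
    using ry by (auto simp: F2_def)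
qed


type_synonym h3 = "int \<times> int \<times> int"

fun hmul :: "h3 \<Rightarrow> h3 \<Rightarrow> h3" where
  "hmul (a, b, c) (a', b', c') = (a + a', b + b', c + c' + a * b')"

lemma hmul_assoc: "hmul (hmul x y) z = hmul x (hmul y z)"
  by (cases x; cases y; cases z) (simp add: algebra_simps)

definition H :: "h3 monoid" where
  "H = \<lparr> carrier = UNIV, mult = hmul, one = (0, 0, 0) \<rparr>"

lemma group_H: "group H"
proof (rule groupI)
  fix x assume "x \<in> carrier H"
  obtain a b c where x: "x = (a, b, c)" by (cases x) auto
  show "\<exists>y\<in>carrier H. y \<otimes>\<^bsub>H\<^esub> x = \<one>\<^bsub>H\<^esub>"
    by (rule bexI[of _ "(-a, -b, a*b - c)"]) (auto simp: H_def x)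
qed (auto simp: H_def hmul_assoc)

definition el :: "letter2 \<Rightarrow> h3" where
  "el l = (if snd l then (0, if fst l then -1 else 1, 0) else (if fst l then -1 else 1, 0, 0))"

definition phi :: "letter2 list \<Rightarrow> h3" where
  "phi w = foldr (\<lambda>l acc. hmul (el l) acc) w (0, 0, 0)"

lemma hmul_0[simp]: "hmul (0,0,0) x = x" "hmul x (0,0,0) = x"
  by (cases x; simp)+

lemma el_inv: "hmul (el l) (el (inv_letter l)) = (0,0,0)"
  by (cases l) (auto simp: el_def inv_letter_def)

lemma phi_Cons[simp]: "phi (l # w) = hmul (el l) (phi w)" by (simp add: phi_def)
lemma phi_Nil[simp]: "phi [] = (0,0,0)" by (simp add: phi_def)

lemma phi_append: "phi (a @ b) = hmul (phi a) (phi b)"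
  by (induction a) (auto simp: hmul_assoc)

lemma phi_stp: "phi (stp l s) = hmul (el l) (phi s)"
proof (cases s)
  case Nil then show ?thesis by (simp add: stp_def)
next
  case (Cons h t)
  show ?thesis
  proof (cases "h = inv_letter l")
    case True
    then show ?thesis using Cons
      by (simp add: stp_def hmul_assoc[symmetric] el_inv)
  qed (use Cons in \<open>simp add: stp_def\<close>)
qed

lemma phi_foldr: "phi (foldr stp w s) = hmul (phi w) (phi s)"
  by (induction w) (auto simp: phi_stp hmul_assoc)

lemma phi_hom: "phi \<in> hom F2 H"
  unfolding hom_def by (auto simp: F2_def H_def reduce_stp phi_foldr phi_append)

lemma H_pow_nat_x: "(a, 0, 0) [^]\<^bsub>H\<^esub> (k::nat) = (int k * a, 0, 0)"
  by (induction k) (simp_all add: H_def algebra_simps)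

lemma H_pow_nat_y: "(0, b, 0) [^]\<^bsub>H\<^esub> (k::nat) = (0, int k * b, 0)"
  by (induction k) (simp_all add: H_def algebra_simps)

lemma H_inv: "inv\<^bsub>H\<^esub> (a, b, c) = (-a, -b, a*b - c)"
  by (rule group.inv_equality[OF group_H]) (auto simp: H_def)

lemma H_pow_x: "(1, 0, 0) [^]\<^bsub>H\<^esub> (k::int) = (k, 0, 0)"
  by (simp add: int_pow_def2 H_pow_nat_x H_inv)

lemma H_pow_y: "(0, 1, 0) [^]\<^bsub>H\<^esub> (k::int) = (0, k, 0)"
  by (simp add: int_pow_def2 H_pow_nat_y H_inv)

lemma gens: "gen_x \<in> carrier F2" "gen_y \<in> carrier F2"
  by (auto simp: F2_def gen_x_def gen_y_def)

lemma phi_gens: "phi gen_x = (1,0,0)" "phi gen_y = (0,1,0)"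
  by (auto simp: gen_x_def gen_y_def el_def)

lemma phi_pow_x: "phi (gen_x [^]\<^bsub>F2\<^esub> (k::int)) = (k, 0, 0)"
  using hom_int_pow[OF phi_hom gens(1) group_F2 group_H, of k] by (simp add: phi_gens H_pow_x)

lemma phi_pow_y: "phi (gen_y [^]\<^bsub>F2\<^esub> (k::int)) = (0, k, 0)"
  using hom_int_pow[OF phi_hom gens(2) group_F2 group_H, of k] by (simp add: phi_gens H_pow_y)

lemma phi_mult: "a \<in> carrier F2 \<Longrightarrow> b \<in> carrier F2 \<Longrightarrow> phi (a \<otimes>\<^bsub>F2\<^esub> b) = hmul (phi a) (phi b)"
  using phi_hom unfolding hom_def by (simp add: H_def)

lemma only_if:
  fixes m n :: int
  assumes a: "a \<in> carrier F2" and b: "b \<in> carrier F2"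
    and eq: "gen_x [^]\<^bsub>F2\<^esub> m \<otimes>\<^bsub>F2\<^esub> gen_y [^]\<^bsub>F2\<^esub> n
              \<otimes>\<^bsub>F2\<^esub> gen_x [^]\<^bsub>F2\<^esub> (- m) \<otimes>\<^bsub>F2\<^esub> gen_y [^]\<^bsub>F2\<^esub> (- n)
            = a \<otimes>\<^bsub>F2\<^esub> a \<otimes>\<^bsub>F2\<^esub> b \<otimes>\<^bsub>F2\<^esub> b"
  shows "even (m * n)"
proof -
  interpret G: group F2 by (rule group_F2)
  have "phi (gen_x [^]\<^bsub>F2\<^esub> m \<otimes>\<^bsub>F2\<^esub> gen_y [^]\<^bsub>F2\<^esub> n
              \<otimes>\<^bsub>F2\<^esub> gen_x [^]\<^bsub>F2\<^esub> (- m) \<otimes>\<^bsub>F2\<^esub> gen_y [^]\<^bsub>F2\<^esub> (- n)) = (0, 0, m * n)"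
    using gens by (simp add: phi_mult phi_pow_x phi_pow_y)
  moreover have "phi (a \<otimes>\<^bsub>F2\<^esub> a \<otimes>\<^bsub>F2\<^esub> b \<otimes>\<^bsub>F2\<^esub> b)
     = hmul (hmul (hmul (phi a) (phi a)) (phi b)) (phi b)"
    using a b by (simp add: phi_mult)
  ultimately have e: "hmul (hmul (hmul (phi a) (phi a)) (phi b)) (phi b) = (0, 0, m * n)"
    using eq by simp
  obtain a1 a2 a3 where A: "phi a = (a1, a2, a3)" by (cases "phi a") auto
  obtain b1 b2 b3 where B: "phi b = (b1, b2, b3)" by (cases "phi b") auto
  from e have e1: "b1 = -a1" and e2: "b2 = - a2" and e3: "a3 + a3 + a1 * a2 + b3 + (a1 + a1) * b2 + b3 + (a1 + a1 + b1) * b2 = m * n"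
    by (auto simp: A B)
  from e3 have "m * n = 2 * (a3 + b3 - a1 * a2)" by (simp add: e1 e2 algebra_simps)
  then show ?thesis by simp
qed

lemma (in group) cancel_mid: "w \<in> carrier G \<Longrightarrow> v \<in> carrier G \<Longrightarrow> z \<in> carrier G \<Longrightarrow> w \<otimes> v = \<one> \<Longrightarrow> w \<otimes> (v \<otimes> z) = z"
  by (simp add: m_assoc[symmetric])

lemma (in group) if1:
  fixes k :: int
  assumes x: "x \<in> carrier G" and v: "v \<in> carrier G" and w: "w \<in> carrier G" and wv: "w \<otimes> v = \<one>"
  shows "x [^] (2*k) \<otimes> v \<otimes> x [^] (-(2*k)) \<otimes> w
     = x [^] k \<otimes> x [^] k \<otimes> (v \<otimes> x [^] (-k) \<otimes> w) \<otimes> (v \<otimes> x [^] (-k) \<otimes> w)"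
proof -
  have p: "x [^] (2*k) = x [^] k \<otimes> x [^] k" using int_pow_mult[OF x, of k k] by (metis mult_2)
  have q: "x [^] (-(2*k)) = x [^] (-k) \<otimes> x [^] (-k)" using int_pow_mult[OF x, of "-k" "-k"] by (metis mult_2 minus_add_distrib)
  have g: "P \<otimes> P \<otimes> v \<otimes> (Q \<otimes> Q) \<otimes> w = P \<otimes> P \<otimes> (v \<otimes> Q \<otimes> w) \<otimes> (v \<otimes> Q \<otimes> w)"
    if "P \<in> carrier G" "Q \<in> carrier G" for P Q
    using that v w by (simp add: m_assoc cancel_mid[OF w v _ wv])
  show ?thesis unfolding p q using x by (intro g) auto
qed

lemma (in group) if2:
  fixes l :: int
  assumes y: "y \<in> carrier G" and u: "u \<in> carrier G" and u': "u' \<in> carrier G" and uu: "u' \<otimes> u = \<one>"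
  shows "u \<otimes> y [^] (2*l) \<otimes> u' \<otimes> y [^] (-(2*l))
     = (u \<otimes> y [^] l \<otimes> u') \<otimes> (u \<otimes> y [^] l \<otimes> u') \<otimes> y [^] (-l) \<otimes> y [^] (-l)"
proof -
  have p: "y [^] (2*l) = y [^] l \<otimes> y [^] l" using int_pow_mult[OF y, of l l] by (metis mult_2)
  have q: "y [^] (-(2*l)) = y [^] (-l) \<otimes> y [^] (-l)" using int_pow_mult[OF y, of "-l" "-l"] by (metis mult_2 minus_add_distrib)
  have g: "u \<otimes> (P \<otimes> P) \<otimes> u' \<otimes> (Q \<otimes> Q) = (u \<otimes> P \<otimes> u') \<otimes> (u \<otimes> P \<otimes> u') \<otimes> Q \<otimes> Q"
    if "P \<in> carrier G" "Q \<in> carrier G" for P Q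
    using that u u' by (simp add: m_assoc cancel_mid[OF u' u _ uu])
  show ?thesis unfolding p q using y by (intro g) auto
qed

theorem theorem1p1:
  fixes m n :: int
  shows "(\<exists>a\<in>carrier F2. \<exists>b\<in>carrier F2.
            gen_x [^]\<^bsub>F2\<^esub> m \<otimes>\<^bsub>F2\<^esub> gen_y [^]\<^bsub>F2\<^esub> n
              \<otimes>\<^bsub>F2\<^esub> gen_x [^]\<^bsub>F2\<^esub> (- m) \<otimes>\<^bsub>F2\<^esub> gen_y [^]\<^bsub>F2\<^esub> (- n)
            = a \<otimes>\<^bsub>F2\<^esub> a \<otimes>\<^bsub>F2\<^esub> b \<otimes>\<^bsub>F2\<^esub> b)
         \<longleftrightarrow> even (m * n)"
proof
  assume "\<exists>a\<in>carrier F2. \<exists>b\<in>carrier F2.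
            gen_x [^]\<^bsub>F2\<^esub> m \<otimes>\<^bsub>F2\<^esub> gen_y [^]\<^bsub>F2\<^esub> n
              \<otimes>\<^bsub>F2\<^esub> gen_x [^]\<^bsub>F2\<^esub> (- m) \<otimes>\<^bsub>F2\<^esub> gen_y [^]\<^bsub>F2\<^esub> (- n)
            = a \<otimes>\<^bsub>F2\<^esub> a \<otimes>\<^bsub>F2\<^esub> b \<otimes>\<^bsub>F2\<^esub> b"
  then show "even (m * n)" using only_if by blast
next
  interpret G: group F2 by (rule group_F2)
  assume "even (m * n)"
  then have "even m \<or> even n" by simp
  then show "\<exists>a\<in>carrier F2. \<exists>b\<in>carrier F2.
            gen_x [^]\<^bsub>F2\<^esub> m \<otimes>\<^bsub>F2\<^esub> gen_y [^]\<^bsub>F2\<^esub> n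
              \<otimes>\<^bsub>F2\<^esub> gen_x [^]\<^bsub>F2\<^esub> (- m) \<otimes>\<^bsub>F2\<^esub> gen_y [^]\<^bsub>F2\<^esub> (- n)
            = a \<otimes>\<^bsub>F2\<^esub> a \<otimes>\<^bsub>F2\<^esub> b \<otimes>\<^bsub>F2\<^esub> b"
  proof
    assume "even m"
    then obtain k where k: "m = 2 * k" by blast
    have wv: "gen_y [^]\<^bsub>F2\<^esub> (- n) \<otimes>\<^bsub>F2\<^esub> gen_y [^]\<^bsub>F2\<^esub> n = \<one>\<^bsub>F2\<^esub>"
      using G.int_pow_mult[OF gens(2), of "-n" n] by simp
    show ?thesis unfolding k
      by (rule bexI[where x="gen_x [^]\<^bsub>F2\<^esub> k"], rule bexI[where x="gen_y [^]\<^bsub>F2\<^esub> n \<otimes>\<^bsub>F2\<^esub> gen_x [^]\<^bsub>F2\<^esub> (-k) \<otimes>\<^bsub>F2\<^esub> gen_y [^]\<^bsub>F2\<^esub> (-n)"],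
          rule G.if1[OF gens(1) G.int_pow_closed[OF gens(2)] G.int_pow_closed[OF gens(2)] wv, of k])
         (use gens in auto)
  next
    assume "even n"
    then obtain l where l: "n = 2 * l" by blast
    have uu: "gen_x [^]\<^bsub>F2\<^esub> (- m) \<otimes>\<^bsub>F2\<^esub> gen_x [^]\<^bsub>F2\<^esub> m = \<one>\<^bsub>F2\<^esub>"
      using G.int_pow_mult[OF gens(1), of "-m" m] by simp
    show ?thesis unfolding l
      by (rule bexI[where x="gen_x [^]\<^bsub>F2\<^esub> m \<otimes>\<^bsub>F2\<^esub> gen_y [^]\<^bsub>F2\<^esub> l \<otimes>\<^bsub>F2\<^esub> gen_x [^]\<^bsub>F2\<^esub> (-m)"], rule bexI[where x="gen_y [^]\<^bsub>F2\<^esub> (-l)"],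
          rule G.if2[OF gens(2) G.int_pow_closed[OF gens(1)] G.int_pow_closed[OF gens(1)] uu, of l])
         (use gens in auto)
  qed
qed

end
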